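(* Let $\mathcal H$ be a real Hilbert space, let $f:\mathcal H\to\mathbb R$ be a convex $\mathcal C^2(\mathcal H)$ function with nonempty set of minimizers, and let $e\in\mathcal C^1([t_0,+\infty[;\mathcal H)$. Then for any $t_0>0$ and any Cauchy data $(x_0,\dot x_0)\in\mathcal H\times\mathcal H$, the system $$\ddot x(t)+\frac{\alpha}{t}\dot x(t)+\beta\frac{d}{dt}\big(\nabla f(x(t))+e(t)\big)+\nabla f(x(t))+e(t)=0$$ with $\alpha,\beta\ge0$ admits a unique classical global solution $x:[t_0,+\infty[\to\mathcal H$ (i.e. $x\in\mathcal C^2([t_0,+\infty[)$ satisfying the equation for all $t\ge t_0$) with $(x(t_0),\dot x(t_0))=(x_0,\dot x_0)$.
   Context: Standing assumption of the paper: $f$ is convex and $\operatorname{argmin} f\neq\emptyset$. *)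

theory Defs
  imports "HOL-Analysis.Analysis"
begin

definition C2_with_gradient :: "('a::{real_inner,complete_space} \<Rightarrow> real) \<Rightarrow> ('a \<Rightarrow> 'a) \<Rightarrow> bool" where
  "C2_with_gradient f gradf \<longleftrightarrow>
     (\<forall>x. (f has_derivative (\<lambda>h. inner (gradf x) h)) (at x)) \<and>
     (\<exists>D2 :: 'a \<Rightarrow> ('a \<Rightarrow>\<^sub>L 'a). (\<forall>x. (gradf has_derivative blinfun_apply (D2 x)) (at x))
        \<and> continuous_on UNIV D2)"

definition C1_on_halfline :: "real \<Rightarrow> (real \<Rightarrow> 'a::real_normed_vector) \<Rightarrow> bool" where
  "C1_on_halfline t0 e \<longleftrightarrow>
     (\<exists>e'. (\<forall>t\<in>{t0..}. (e has_vector_derivative e' t) (at t within {t0..}))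
        \<and> continuous_on {t0..} e')"

definition classical_solution ::
  "real \<Rightarrow> real \<Rightarrow> real \<Rightarrow> ('a::{real_inner,complete_space} \<Rightarrow> 'a) \<Rightarrow> (real \<Rightarrow> 'a)
     \<Rightarrow> 'a \<Rightarrow> 'a \<Rightarrow> (real \<Rightarrow> 'a) \<Rightarrow> bool" where
  "classical_solution \<alpha> \<beta> t0 gradf e x0 v0 x \<longleftrightarrow>
     (\<exists>x' x''.
        (\<forall>t\<in>{t0..}. (x has_vector_derivative x' t) (at t within {t0..})) \<and>
        (\<forall>t\<in>{t0..}. (x' has_vector_derivative x'' t) (at t within {t0..})) \<and>
        continuous_on {t0..} x'' \<and>
        (\<forall>t\<in>{t0..}. \<exists>w. ((\<lambda>s. gradf (x s) + e s) has_vector_derivative w) (at t within {t0..}) \<and>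
             x'' t + (\<alpha> / t) *\<^sub>R x' t + \<beta> *\<^sub>R w + gradf (x t) + e t = 0) \<and>
        x t0 = x0 \<and> x' t0 = v0)"

end

theory Submission
  imports Defs
begin

lemma vec_mvt_bound:
  fixes f :: "real \<Rightarrow> 'b::real_normed_vector"
  assumes "a \<le> b" "\<And>x. x \<in> {a..b} \<Longrightarrow> (f has_vector_derivative f' x) (at x within {a..b})"
    "\<And>x. x\<in>{a..b} \<Longrightarrow> norm (f' x) \<le> B"
  shows "norm (f b - f a) \<le> B * (b - a)"
proof -
  have "norm (f b - f a) \<le> B * norm (b - a)"
  proof (rule differentiable_bound[of "{a..b}" f "\<lambda>x h. h *\<^sub>R f' x" B b a])
    show "(f has_derivative (\<lambda>h. h *\<^sub>R f' x)) (at x within {a..b})" if "x \<in> {a..b}" for x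
      using assms(2)[OF that] by (simp add: has_vector_derivative_def)
    show "onorm (\<lambda>h. h *\<^sub>R f' x) \<le> B" if "x \<in> {a..b}" for x
    proof (rule onorm_le)
      fix h :: real
      have "norm (h *\<^sub>R f' x) = \<bar>h\<bar> * norm (f' x)" by simp
      also have "\<dots> \<le> \<bar>h\<bar> * B" using assms(3)[OF that] by (rule mult_left_mono) simp
      also have "\<dots> = B * norm h" by simp
      finally show "norm (h *\<^sub>R f' x) \<le> B * norm h" .
    qed
  qed (use assms in auto)
  then show ?thesis using assms(1) by simp
qed

lemma convex_hess_nonneg:
  fixes f :: "'a::real_inner \<Rightarrow> real"
  assumes cv: "convex_on UNIV f" and df: "\<And>x. (f has_derivative (\<lambda>h. inner (g x) h)) (at x)"
    and dg: "\<And>x. (g has_derivative D x) (at x)"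
  shows "inner (D y h) h \<ge> 0"
proof -
  define \<phi> where "\<phi> s = f (y + s *\<^sub>R h)" for s :: real
  have dphi: "(\<phi> has_field_derivative inner (g (y + s *\<^sub>R h)) h) (at s)" for s
  proof -
    have "((\<lambda>s. f (y + s *\<^sub>R h)) has_derivative (\<lambda>t. inner (g (y + s *\<^sub>R h)) (t *\<^sub>R h))) (at s)"
      by (rule has_derivative_compose[OF _ df, unfolded o_def]) (auto intro!: derivative_eq_intros)
    then show ?thesis unfolding \<phi>_def has_field_derivative_def
      by (rule has_derivative_eq_rhs) (auto simp: fun_eq_iff)
  qed
  have cphi: "convex_on UNIV \<phi>"
    unfolding convex_on_def
  proof (intro conjI ballI allI impI)
    fix x1 x2 u v :: real assume "u \<ge> 0" "v \<ge> 0" "u + v = 1"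
    then have "y + (u *\<^sub>R x1 + v *\<^sub>R x2) *\<^sub>R h = u *\<^sub>R (y + x1 *\<^sub>R h) + v *\<^sub>R (y + x2 *\<^sub>R h)"
      by (simp add: algebra_simps flip: scaleR_add_left)
    then show "\<phi> (u *\<^sub>R x1 + v *\<^sub>R x2) \<le> u * \<phi> x1 + v * \<phi> x2"
      using cv \<open>u \<ge> 0\<close> \<open>v \<ge> 0\<close> \<open>u + v = 1\<close> unfolding \<phi>_def convex_on_def by auto
  qed simp
  have tang: "\<phi> x - \<phi> c \<ge> inner (g (y + c *\<^sub>R h)) h * (x - c)" for x c
    by (rule convex_on_imp_above_tangent[OF cphi]) (auto intro: has_field_derivative_at_within dphi)
  define \<psi> where "\<psi> s = inner (g (y + s *\<^sub>R h) - g y) h" for s :: real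
  have psi: "\<psi> s * s \<ge> 0" for s
    using tang[of s 0] tang[of 0 s] unfolding \<psi>_def by (simp add: inner_diff_left algebra_simps)
  have "((\<lambda>s. g (y + s *\<^sub>R h)) has_derivative (\<lambda>t. D y (t *\<^sub>R h))) (at 0)"
  proof -
    have "((\<lambda>s. y + s *\<^sub>R h) has_derivative (\<lambda>t. t *\<^sub>R h)) (at 0)"
      by (auto intro!: derivative_eq_intros)
    from has_derivative_compose[OF this dg[of "y + 0 *\<^sub>R h"]] show ?thesis by simp
  qed
  then have "(\<psi> has_derivative (\<lambda>t. inner (D y (t *\<^sub>R h)) h)) (at 0)"
    unfolding \<psi>_def by (auto intro!: derivative_eq_intros)
  moreover have "(\<lambda>t. inner (D y (t *\<^sub>R h)) h) = (\<lambda>t. t * inner (D y h) h)"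
    using has_derivative_linear[OF dg[of y]] by (simp add: linear_cmul fun_eq_iff)
  ultimately have "(\<psi> has_field_derivative inner (D y h) h) (at 0)"
    unfolding has_field_derivative_def by (simp add: mult.commute[of _ "inner (D y h) h"])
  show ?thesis
  proof (rule ccontr)
    assume "\<not> ?thesis"
    then obtain d where "d > 0" "\<forall>t>0. t < d \<longrightarrow> \<psi> 0 > \<psi> (0 + t)"
      using DERIV_neg_dec_right[OF \<open>(\<psi> has_field_derivative _) _\<close>] by force
    then have "\<psi> (d/2) < 0" by (auto simp: \<psi>_def)
    then show False using mult_neg_pos[of "\<psi> (d/2)" "d/2"] psi[of "d/2"] \<open>d > 0\<close> by linarith
  qed
qed



lemma picard_local:
  fixes F :: "real \<Rightarrow> 'b::banach \<Rightarrow> 'b"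
  assumes "0 < \<delta>" "0 \<le> R" "0 \<le> L" "\<delta> * M \<le> R" "\<delta> * L \<le> 1/2"
   and cont: "\<And>u. continuous_on {t1..t1+\<delta>} u \<Longrightarrow> (\<forall>s\<in>{t1..t1+\<delta>}. u s \<in> cball q R)
       \<Longrightarrow> continuous_on {t1..t1+\<delta>} (\<lambda>s. F s (u s))"
   and bnd: "\<And>s v. s \<in> {t1..t1+\<delta>} \<Longrightarrow> v \<in> cball q R \<Longrightarrow> norm (F s v) \<le> M"
   and lip: "\<And>s v w. s \<in> {t1..t1+\<delta>} \<Longrightarrow> v \<in> cball q R \<Longrightarrow> w \<in> cball q R
       \<Longrightarrow> norm (F s v - F s w) \<le> L * norm (v - w)"
  shows "\<exists>u. u t1 = q \<and> continuous_on {t1..t1+\<delta>} u \<and> (\<forall>s\<in>{t1..t1+\<delta>}. u s \<in> cball q R) \<and>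
     (\<forall>t\<in>{t1..t1+\<delta>}. (u has_vector_derivative F t (u t)) (at t within {t1..t1+\<delta>}))"
proof -
  define I where "I = {t1..t1+\<delta>}"
  have M0: "0 \<le> M" using bnd[of t1 q] \<open>0 < \<delta>\<close> \<open>0 \<le> R\<close> norm_ge_zero[of "F t1 q"] by (auto simp del: norm_ge_zero)
  define inv where "inv u \<longleftrightarrow> continuous_on I u \<and> (\<forall>s\<in>I. u s \<in> cball q R)" for u :: "real \<Rightarrow> 'b"
  define P where "P u = (\<lambda>t. q + integral {t1..t} (\<lambda>s. F s (u s)))" for u :: "real \<Rightarrow> 'b"
  have sub: "{t1..t} \<subseteq> I" if "t \<in> I" for t using that by (auto simp: I_def)
  have intg: "(\<lambda>s. F s (u s)) integrable_on {t1..t}" if "inv u" "t \<in> I" for u t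
    by (rule integrable_continuous_real, rule continuous_on_subset[OF _ sub[OF that(2)]])
       (use cont that in \<open>auto simp: inv_def I_def\<close>)
  have invP: "inv (P u)" if "inv u" for u
  proof -
    have "continuous_on I (\<lambda>t. integral {t1..t} (\<lambda>s. F s (u s)))"
      unfolding I_def by (rule indefinite_integral_continuous_1, rule integrable_continuous_real)
         (use cont that in \<open>auto simp: inv_def I_def\<close>)
    then have c: "continuous_on I (P u)" unfolding P_def by (intro continuous_intros)
    have "dist q (P u t) \<le> R" if "t \<in> I" for t
    proof -
      have "norm (integral {t1..t} (\<lambda>s. F s (u s))) \<le> M * (t - t1)"
        by (rule integral_bound) (use that \<open>inv u\<close> sub[OF that] in
            \<open>auto simp: I_def inv_def intro: continuous_on_subset[OF cont] bnd\<close>)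
      also have "\<dots> \<le> M * \<delta>" using that M0 by (auto simp: I_def intro!: mult_left_mono)
      finally show ?thesis using assms(4) by (simp add: P_def dist_norm mult.commute)
    qed
    with c show ?thesis by (auto simp: inv_def)
  qed
  have contr: "norm (P u t - P v t) \<le> K / 2"
    if "inv u" "inv v" "\<forall>s\<in>I. norm (u s - v s) \<le> K" "t \<in> I" "0 \<le> K" for u v K t
  proof -
    have "P u t - P v t = integral {t1..t} (\<lambda>s. F s (u s) - F s (v s))"
      unfolding P_def using intg[OF that(1,4)] intg[OF that(2,4)] by (simp add: integral_diff)
    also have "norm \<dots> \<le> (L * K) * (t - t1)"
    proof (rule integral_bound)
      show "t1 \<le> t" using that by (auto simp: I_def)
      show "continuous_on {t1..t} (\<lambda>s. F s (u s) - F s (v s))"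
        using that sub[OF that(4)] cont unfolding inv_def I_def
        by (intro continuous_intros continuous_on_subset[OF cont]) auto
      show "norm (F s (u s) - F s (v s)) \<le> L * K" if "s \<in> {t1..t}" for s
      proof -
        have s: "s \<in> I" using sub[OF \<open>t \<in> I\<close>] that by auto
        have "norm (F s (u s) - F s (v s)) \<le> L * norm (u s - v s)"
          using lip[of s "u s" "v s"] s \<open>inv u\<close> \<open>inv v\<close> by (auto simp: inv_def I_def)
        also have "\<dots> \<le> L * K" using \<open>0 \<le> L\<close> \<open>\<forall>s\<in>I. norm (u s - v s) \<le> K\<close> s
          by (auto intro: mult_left_mono)
        finally show ?thesis .
      qed
    qed
    also have "\<dots> \<le> (L * K) * \<delta>" using that \<open>0 \<le> L\<close> by (auto simp: I_def intro!: mult_left_mono)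
    also have "\<dots> = (\<delta> * L) * K" by simp
    also have "\<dots> \<le> (1/2) * K" using assms(5) \<open>0 \<le> K\<close> by (rule mult_right_mono)
    finally show ?thesis by simp
  qed
  define U where "U n = (P ^^ n) (\<lambda>_. q)" for n
  have invU: "inv (U n)" for n
  proof (induction n)
    case 0 show ?case by (simp add: U_def inv_def \<open>0 \<le> R\<close>)
  next
    case (Suc n) then show ?case using invP[OF Suc.IH[unfolded U_def]] by (simp add: U_def)
  qed
  have step: "\<forall>t\<in>I. norm (U (Suc n) t - U n t) \<le> 2 * R * (1/2)^n" for n
  proof (induction n)
    case 0
    have "norm (U 1 t - U 0 t) \<le> 2 * R" if "t \<in> I" for t
      using invU[of 1] that \<open>0 \<le> R\<close> by (auto simp: inv_def U_def dist_norm norm_minus_commute)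
    then show ?case by simp
  next
    case (Suc n)
    have "norm (U (Suc (Suc n)) t - U (Suc n) t) \<le> (2 * R * (1/2)^n) / 2" if "t \<in> I" for t
      unfolding U_def funpow.simps o_def
      by (rule contr[unfolded U_def]) (use invU invP Suc.IH that \<open>0 \<le> R\<close> in \<open>auto simp: U_def\<close>)
    then show ?case by simp
  qed
  have tele: "\<forall>t\<in>I. norm (U (n + k) t - U n t) \<le> 4 * R * ((1/2)^n - (1/2)^(n+k))" for n k
  proof (induction k)
    case (Suc k)
    show ?case
    proof
      fix t assume t: "t \<in> I"
      have "norm (U (n + Suc k) t - U n t) \<le> norm (U (Suc (n + k)) t - U (n+k) t) + norm (U (n + k) t - U n t)"
        using norm_triangle_ineq[of "U (Suc (n + k)) t - U (n+k) t" "U (n + k) t - U n t"] by simp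
      also have "\<dots> \<le> 2 * R * (1/2)^(n+k) + 4 * R * ((1/2)^n - (1/2)^(n+k))"
        using step Suc.IH t by (intro add_mono) auto
      also have "\<dots> = 4 * R * ((1/2)^n - (1/2)^(n + Suc k))" by (simp add: algebra_simps)
      finally show "norm (U (n + Suc k) t - U n t) \<le> 4 * R * ((1/2)^n - (1/2)^(n + Suc k))" .
    qed
  qed simp
  have tele2: "norm (U m t - U n t) \<le> 4 * R * (1/2)^n" if "n \<le> m" "t \<in> I" for m n t
  proof -
    obtain k where "m = n + k" using \<open>n \<le> m\<close> le_Suc_ex by blast
    then have "norm (U m t - U n t) \<le> 4 * R * ((1/2)^n - (1/2)^(n+k))" using tele that by auto
    also have "\<dots> \<le> 4 * R * (1/2)^n" using \<open>0 \<le> R\<close> by (intro mult_left_mono) auto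
    finally show ?thesis .
  qed
  have small: "\<exists>N. \<forall>n\<ge>N. c * (1/2::real)^n < e" if "e > 0" "c \<ge> 0" for c e
  proof -
    obtain N where N: "(1/2::real)^N < e / (c + 1)" using real_arch_pow_inv[of "e/(c+1)" "1/2"] \<open>e > 0\<close> \<open>c \<ge> 0\<close> by auto
    have "c * (1/2::real)^n < e" if "n \<ge> N" for n
    proof -
      have "c * (1/2::real)^n \<le> (c + 1) * (1/2)^N"
        using that \<open>c \<ge> 0\<close> by (intro mult_mono power_decreasing) auto
      also have "\<dots> < (c + 1) * (e / (c + 1))" using N \<open>c \<ge> 0\<close> by (intro mult_strict_left_mono) auto
      finally show ?thesis using \<open>c \<ge> 0\<close> by simp
    qed
    then show ?thesis by blast
  qed
  have cauchy: "Cauchy (\<lambda>n. U n t)" if "t \<in> I" for t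
  proof (rule metric_CauchyI)
    fix e :: real assume "e > 0"
    obtain N where N: "\<forall>n\<ge>N. 4 * R * (1/2::real)^n < e" using small[OF \<open>e > 0\<close>, of "4 * R"] \<open>0 \<le> R\<close> by auto
    have "dist (U m t) (U n t) < e" if "m \<ge> N" "n \<ge> N" for m n
    proof (cases "n \<le> m")
      case True
      then show ?thesis using tele2[OF True \<open>t \<in> I\<close>] N[rule_format, of n] that by (simp add: dist_norm)
    next
      case False
      then show ?thesis using tele2[of m n t] \<open>t \<in> I\<close> N[rule_format, of m] that by (simp add: dist_norm norm_minus_commute)
    qed
    then show "\<exists>N. \<forall>m\<ge>N. \<forall>n\<ge>N. dist (U m t) (U n t) < e" by blast
  qed
  define u where "u t = lim (\<lambda>n. U n t)" for t
  have lim: "(\<lambda>n. U n t) \<longlonglongrightarrow> u t" if "t \<in> I" for t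
    using cauchy[OF that] unfolding u_def by (simp add: Cauchy_convergent_iff convergent_LIMSEQ_iff)
  have err: "norm (U n t - u t) \<le> 4 * R * (1/2)^n" if "t \<in> I" for n t
  proof -
    have "(\<lambda>m. norm (U m t - U n t)) \<longlonglongrightarrow> norm (u t - U n t)"
      by (intro tendsto_intros lim that)
    then have "norm (u t - U n t) \<le> 4 * R * (1/2)^n"
      by (rule Lim_bounded[where M=n]) (use tele2 that in auto)
    then show ?thesis by (simp add: norm_minus_commute)
  qed
  have ucball: "u t \<in> cball q R" if "t \<in> I" for t
  proof -
    have "(\<lambda>m. dist q (U m t)) \<longlonglongrightarrow> dist q (u t)" by (intro tendsto_intros lim that)
    then have "dist q (u t) \<le> R"
      by (rule Lim_bounded[where M=0]) (use invU that in \<open>auto simp: inv_def\<close>)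
    then show ?thesis by simp
  qed
  have ucont: "continuous_on I u"
  proof (rule uniform_limit_theorem[where F=sequentially and f=U])
    show "\<forall>\<^sub>F n in sequentially. continuous_on I (U n)" using invU by (auto simp: inv_def)
    show "uniform_limit I U u sequentially"
    proof (rule uniform_limitI)
      fix e :: real assume "e > 0"
      obtain N where N: "\<forall>n\<ge>N. 4 * R * (1/2::real)^n < e" using small[OF \<open>e > 0\<close>, of "4 * R"] \<open>0 \<le> R\<close> by auto
      show "\<forall>\<^sub>F n in sequentially. \<forall>x\<in>I. dist (U n x) (u x) < e"
        unfolding eventually_sequentially
      proof (intro exI allI impI ballI)
        fix n x assume "N \<le> n" "x \<in> I"
        then show "dist (U n x) (u x) < e" using N[rule_format, of n] err[of x n] by (simp add: dist_norm)
      qed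
    qed
  qed simp
  have invu: "inv u" using ucont ucball by (auto simp: inv_def)
  have ueq: "u t = P u t" if "t \<in> I" for t
  proof -
    have "(\<lambda>n. U (Suc n) t) \<longlonglongrightarrow> u t" using lim[OF that] by (rule LIMSEQ_Suc)
    moreover have "(\<lambda>n. U (Suc n) t) \<longlonglongrightarrow> P u t"
    proof -
      have "(\<lambda>n. P (U n) t - P u t) \<longlonglongrightarrow> 0"
      proof (rule Lim_null_comparison)
        show "\<forall>\<^sub>F n in sequentially. norm (P (U n) t - P u t) \<le> (4 * R * (1/2)^n) / 2"
          using contr[OF invU invu _ that, of _ "4 * R * (1/2)^_"] err \<open>0 \<le> R\<close> by (intro always_eventually allI) simp
        show "(\<lambda>n. (4 * R * (1/2::real)^n) / 2) \<longlonglongrightarrow> 0"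
          by (intro tendsto_eq_intros LIMSEQ_power_zero) auto
      qed
      then show ?thesis by (simp add: U_def LIM_zero_iff)
    qed
    ultimately show ?thesis by (rule LIMSEQ_unique)
  qed
  have "u t1 = q" using ueq[of t1] \<open>0 < \<delta>\<close> by (simp add: I_def P_def)
  moreover have "(u has_vector_derivative F t (u t)) (at t within I)" if "t \<in> I" for t
  proof (rule has_vector_derivative_transform[OF that])
    show "u s = P u s" if "s \<in> I" for s using ueq[OF that] .
    show "(P u has_vector_derivative F t (u t)) (at t within I)"
    proof -
      have "((\<lambda>t. integral {t1..t} (\<lambda>s. F s (u s))) has_vector_derivative F t (u t)) (at t within {t1..t1+\<delta>})"
        by (rule integral_has_vector_derivative) (use cont invu that in \<open>auto simp: inv_def I_def\<close>)
      from has_vector_derivative_add[OF has_vector_derivative_const this, of q]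
      show ?thesis unfolding P_def I_def by simp
    qed
  qed
  ultimately have "u t1 = q \<and> continuous_on I u \<and> (\<forall>s\<in>I. u s \<in> cball q R) \<and>
     (\<forall>t\<in>I. (u has_vector_derivative F t (u t)) (at t within I))"
    using invu unfolding inv_def by simp
  then show ?thesis unfolding I_def by (rule exI[where x=u])
qed



definition sol :: "(real \<Rightarrow> 'b::real_normed_vector \<Rightarrow> 'b) \<Rightarrow> real \<Rightarrow> real \<Rightarrow> (real \<Rightarrow> 'b) \<Rightarrow> bool" where
  "sol F a b u \<longleftrightarrow> (\<forall>t\<in>{a..b}. (u has_vector_derivative F t (u t)) (at t within {a..b}))"

lemma sol_cont: assumes "sol F a b u" shows "continuous_on {a..b} u"
  unfolding continuous_on_eq_continuous_within
proof
  fix t assume "t \<in> {a..b}"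
  then have "(u has_vector_derivative F t (u t)) (at t within {a..b})" using assms by (simp add: sol_def)
  then show "continuous (at t within {a..b}) u" by (rule has_vector_derivative_continuous)
qed

lemma sol_restrict: assumes "sol F a b u" "a \<le> a'" "b' \<le> b" shows "sol F a' b' u"
  unfolding sol_def
proof
  fix t assume t: "t \<in> {a'..b'}"
  then have "t \<in> {a..b}" using assms by auto
  then have "(u has_vector_derivative F t (u t)) (at t within {a..b})" using assms(1) by (simp add: sol_def)
  then show "(u has_vector_derivative F t (u t)) (at t within {a'..b'})"
    by (rule has_vector_derivative_within_subset) (use assms in auto)
qed

lemma sol_glue:
  assumes "sol F a b u" "sol F b c w" "u b = w b" "a \<le> b" "b \<le> c"
  shows "sol F a c (\<lambda>t. if t \<in> {a..b} then u t else w t)"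
  unfolding sol_def
proof
  fix t assume t: "t \<in> {a..c}"
  have cl: "closure {a..b} \<inter> closure {b..c} = {b}" using assms(4,5) by auto
  have "((\<lambda>t. if t \<in> {a..b} then u t else w t) has_vector_derivative
     (if t \<in> {a..b} then F t (u t) else F t (w t))) (at t within {a..c})"
    apply (rule has_vector_derivative_If_within_closures[where T="{b..c}"])
    using t assms unfolding sol_def cl by (auto simp: insert_absorb)
  then show "((\<lambda>t. if t \<in> {a..b} then u t else w t) has_vector_derivative
     F t (if t \<in> {a..b} then u t else w t)) (at t within {a..c})"
    by (simp add: if_distrib)
qed

context
  fixes F :: "real \<Rightarrow> 'b::banach \<Rightarrow> 'b" and t0 :: real
  assumes Fcont: "\<And>a b u. t0 \<le> a \<Longrightarrow> continuous_on {a..b} u \<Longrightarrow> continuous_on {a..b} (\<lambda>s. F s (u s))"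
    and Flip: "\<And>p. \<exists>r>0. \<exists>L\<ge>0. \<forall>t\<ge>t0. \<forall>v\<in>cball p r. \<forall>w\<in>cball p r. norm (F t v - F t w) \<le> L * norm (v - w)"
begin

lemma uniq:
  assumes "t0 \<le> a" "sol F a b u" "sol F a b w" "u a = w a"
  shows "\<forall>t\<in>{a..b}. u t = w t"
proof (cases "a \<le> b")
  case False then show ?thesis by simp
next
  case ab: True
  define S where "S = {s\<in>{a..b}. \<forall>\<tau>\<in>{a..s}. u \<tau> = w \<tau>}"
  define c where "c = Sup S"
  have aS: "a \<in> S" using assms ab by (auto simp: S_def)
  have bdd: "bdd_above S" by (auto simp: S_def bdd_above_def)
  have ac: "a \<le> c" unfolding c_def using aS bdd by (rule cSup_upper)
  have cb: "c \<le> b" unfolding c_def using aS by (intro cSup_least) (auto simp: S_def)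
  have left: "u \<tau> = w \<tau>" if "a \<le> \<tau>" "\<tau> < c" for \<tau>
  proof -
    obtain s where "s \<in> S" "\<tau> < s" using \<open>\<tau> < c\<close> aS bdd less_cSup_iff[of S \<tau>] unfolding c_def by blast
    then show ?thesis using that by (auto simp: S_def)
  qed
  have cu: "continuous_on {a..b} u" "continuous_on {a..b} w" using assms sol_cont by auto
  define Z where "Z = {\<tau>\<in>{a..b}. u \<tau> - w \<tau> = 0}"
  have clZ: "closed Z" unfolding Z_def
    by (rule continuous_closed_preimage_constant) (auto intro: continuous_intros cu)
  have atc: "u c = w c"
  proof (cases "a = c")
    case True then show ?thesis using assms by simp
  next
    case False
    then have "{a..<c} \<subseteq> Z" using left cb by (auto simp: Z_def)
    then have "closure {a..<c} \<subseteq> Z" using clZ by (rule closure_minimal)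
    then have "c \<in> Z" using False ac by auto
    then show ?thesis by (simp add: Z_def)
  qed
  have upto: "\<forall>\<tau>\<in>{a..c}. u \<tau> = w \<tau>" using left atc by force
  have "c = b"
  proof (rule ccontr)
    assume "c \<noteq> b" then have cb': "c < b" using cb by simp
    define p where "p = u c"
    obtain r L where rL: "r > 0" "L \<ge> 0"
      "\<forall>t\<ge>t0. \<forall>v\<in>cball p r. \<forall>w\<in>cball p r. norm (F t v - F t w) \<le> L * norm (v - w)"
      using Flip[of p] by blast
    have cin: "c \<in> {a..b}" using ac cb by auto
    obtain \<eta>1 where \<eta>1: "\<eta>1 > 0" "\<forall>\<tau>\<in>{a..b}. dist \<tau> c < \<eta>1 \<longrightarrow> dist (u \<tau>) (u c) < r"
      using cu(1) cin \<open>r > 0\<close> unfolding continuous_on_iff by blast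
    obtain \<eta>2 where \<eta>2: "\<eta>2 > 0" "\<forall>\<tau>\<in>{a..b}. dist \<tau> c < \<eta>2 \<longrightarrow> dist (w \<tau>) (w c) < r"
      using cu(2) cin \<open>r > 0\<close> unfolding continuous_on_iff by blast
    define h where "h = min (min \<eta>1 \<eta>2 / 2) (min (1 / (2 * (L + 1))) (b - c))"
    have h0: "h > 0" using \<eta>1 \<eta>2 cb' rL by (auto simp: h_def)
    have hb: "c + h \<le> b" by (auto simp: h_def)
    have hL: "L * h \<le> 1/2"
    proof -
      have "L * h \<le> (L + 1) * (1 / (2 * (L + 1)))"
        using rL h0 by (intro mult_mono) (auto simp: h_def)
      also have "\<dots> = 1/2" using rL by simp
      finally show ?thesis .
    qed
    define J where "J = {c..c+h}"
    have JS: "J \<subseteq> {a..b}" using ac hb by (auto simp: J_def)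
    have inball: "u \<tau> \<in> cball p r \<and> w \<tau> \<in> cball p r" if "\<tau> \<in> J" for \<tau>
    proof -
      have "dist \<tau> c < \<eta>1" "dist \<tau> c < \<eta>2" "\<tau> \<in> {a..b}" using that JS h0 \<eta>1 \<eta>2
        by (auto simp: J_def dist_real_def h_def)
      then show ?thesis using \<eta>1 \<eta>2 atc by (auto simp: p_def dist_commute less_imp_le)
    qed
    have contd: "continuous_on J (\<lambda>\<tau>. norm (u \<tau> - w \<tau>))"
      by (intro continuous_intros continuous_on_subset[OF cu(1) JS] continuous_on_subset[OF cu(2) JS])
    obtain \<tau>m where \<tau>m: "\<tau>m \<in> J" "\<forall>\<tau>\<in>J. norm (u \<tau> - w \<tau>) \<le> norm (u \<tau>m - w \<tau>m)"
      using continuous_attains_sup[OF _ _ contd] h0 unfolding J_def by fastforce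
    define D where "D = norm (u \<tau>m - w \<tau>m)"
    have "D \<le> (L * D) * (\<tau>m - c)"
    proof -
      have "norm ((u \<tau>m - w \<tau>m) - (u c - w c)) \<le> (L * D) * (\<tau>m - c)"
      proof (rule vec_mvt_bound[where f' = "\<lambda>\<tau>. F \<tau> (u \<tau>) - F \<tau> (w \<tau>)"])
        show "c \<le> \<tau>m" using \<tau>m by (auto simp: J_def)
        show "((\<lambda>\<tau>. u \<tau> - w \<tau>) has_vector_derivative F x (u x) - F x (w x)) (at x within {c..\<tau>m})"
          if "x \<in> {c..\<tau>m}" for x
        proof -
          have sub: "{c..\<tau>m} \<subseteq> {a..b}" using JS \<tau>m by (auto simp: J_def)
          have "x \<in> {a..b}" using that sub by auto
          then show ?thesis using assms(2,3) unfolding sol_def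
            by (intro derivative_intros has_vector_derivative_within_subset[OF _ sub]) auto
        qed
        show "norm (F x (u x) - F x (w x)) \<le> L * D" if "x \<in> {c..\<tau>m}" for x
        proof -
          have xJ: "x \<in> J" using that \<tau>m by (auto simp: J_def)
          have "t0 \<le> x" using xJ JS assms(1) by auto
          then have "norm (F x (u x) - F x (w x)) \<le> L * norm (u x - w x)"
            using rL(3) inball[OF xJ] by blast
          also have "\<dots> \<le> L * D" using \<tau>m xJ rL by (auto simp: D_def intro: mult_left_mono)
          finally show ?thesis .
        qed
      qed
      then show ?thesis using atc by (simp add: D_def)
    qed
    also have "\<dots> \<le> (L * D) * h" using \<tau>m rL by (intro mult_left_mono) (auto simp: J_def D_def)
    also have "\<dots> = (L * h) * D" by simp
    also have "\<dots> \<le> (1/2) * D" using hL by (rule mult_right_mono) (simp add: D_def)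
    finally have "D = 0" by (simp add: D_def)
    then have "\<forall>\<tau>\<in>J. u \<tau> = w \<tau>" using \<tau>m by (auto simp: D_def)
    with upto have "c + h \<in> S" using hb ac h0 unfolding S_def J_def by force
    then have "c + h \<le> c" unfolding c_def using bdd by (rule cSup_upper)
    then show False using h0 by simp
  qed
  then show ?thesis using upto by simp
qed

lemma uniq2:
  assumes "t0 \<le> a" "sol F a b1 u" "sol F a b2 w" "u a = w a" "t \<in> {a..b1}" "t \<le> b2"
  shows "u t = w t"
  using uniq[OF assms(1) sol_restrict[OF assms(2), of a "min b1 b2"] sol_restrict[OF assms(3), of a "min b1 b2"] assms(4)]
    assms(5,6) by auto

lemma local_ext:
  "\<exists>r>0. \<exists>\<delta>>0. \<forall>t1\<in>{t0..T}. \<forall>q\<in>cball p (r/2). \<exists>w. w t1 = q \<and> sol F t1 (t1+\<delta>) w"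
proof -
  obtain r L where rL: "r > 0" "L \<ge> 0"
    "\<forall>t\<ge>t0. \<forall>v\<in>cball p r. \<forall>w\<in>cball p r. norm (F t v - F t w) \<le> L * norm (v - w)"
    using Flip[of p] by blast
  have "continuous_on {t0..T+1} (\<lambda>s. F s p)" using Fcont[of t0 "T+1" "\<lambda>_. p"] by simp
  then have "bounded ((\<lambda>s. F s p) ` {t0..T+1})" by (intro compact_imp_bounded compact_continuous_image) auto
  then obtain Mp where Mp: "\<forall>s\<in>{t0..T+1}. norm (F s p) \<le> Mp" unfolding bounded_iff by auto
  define M where "M = max Mp 0 + L * r"
  have M0: "M \<ge> 0" using rL by (simp add: M_def)
  define \<delta> where "\<delta> = min 1 (min ((r/2) / (M+1)) (1 / (2 * (L + 1))))"
  have \<delta>0: "\<delta> > 0" using rL M0 by (simp add: \<delta>_def)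
  have \<delta>M: "\<delta> * M \<le> r/2"
  proof -
    have "\<delta> * M \<le> ((r/2) / (M+1)) * (M + 1)" using \<delta>0 M0 by (intro mult_mono) (auto simp: \<delta>_def)
    also have "\<dots> = r/2" using M0 by (simp add: field_simps)
    finally show ?thesis .
  qed
  have \<delta>L: "\<delta> * L \<le> 1/2"
  proof -
    have "\<delta> * L \<le> (1 / (2 * (L + 1))) * (L + 1)" using \<delta>0 rL by (intro mult_mono) (auto simp: \<delta>_def)
    also have "\<dots> = 1/2" using rL by simp
    finally show ?thesis .
  qed
  have "\<forall>t1\<in>{t0..T}. \<forall>q\<in>cball p (r/2). \<exists>w. w t1 = q \<and> sol F t1 (t1+\<delta>) w"
  proof (intro ballI)
    fix t1 q assume t1: "t1 \<in> {t0..T}" and q: "q \<in> cball p (r/2)"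
    have ball: "v \<in> cball p r" if "v \<in> cball q (r/2)" for v
      using that q dist_triangle[of p v q] by (auto simp: dist_commute)
    have sI: "s \<in> {t0..T+1}" if "s \<in> {t1..t1+\<delta>}" for s
      using that t1 by (auto simp: \<delta>_def)
    have "\<exists>u. u t1 = q \<and> continuous_on {t1..t1+\<delta>} u \<and> (\<forall>s\<in>{t1..t1+\<delta>}. u s \<in> cball q (r/2)) \<and>
     (\<forall>t\<in>{t1..t1+\<delta>}. (u has_vector_derivative F t (u t)) (at t within {t1..t1+\<delta>}))"
    proof (rule picard_local[of \<delta> "r/2" L M])
      show "0 < \<delta>" "0 \<le> r/2" "0 \<le> L" "\<delta> * M \<le> r/2" "\<delta> * L \<le> 1/2" using \<delta>0 rL \<delta>M \<delta>L by auto
      show "continuous_on {t1..t1+\<delta>} (\<lambda>s. F s (u s))" if "continuous_on {t1..t1+\<delta>} u" for u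
        using Fcont[OF _ that] t1 by auto
      show "norm (F s v) \<le> M" if "s \<in> {t1..t1+\<delta>}" "v \<in> cball q (r/2)" for s v
      proof -
        have st: "s \<ge> t0" using sI[OF that(1)] by auto
        have "norm (F s v) \<le> norm (F s p) + norm (F s v - F s p)" by (rule norm_triangle_sub)
        also have "\<dots> \<le> max Mp 0 + L * r"
        proof (rule add_mono)
          show "norm (F s p) \<le> max Mp 0" using Mp sI[OF that(1)] by force
          have "norm (F s v - F s p) \<le> L * norm (v - p)" using rL(3) st ball[OF that(2)] rL(1) by auto
          also have "\<dots> \<le> L * r" using ball[OF that(2)] rL by (intro mult_left_mono) (auto simp: dist_norm norm_minus_commute)
          finally show "norm (F s v - F s p) \<le> L * r" .
        qed
        finally show ?thesis by (simp add: M_def)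
      qed
      show "norm (F s v - F s w) \<le> L * norm (v - w)" if "s \<in> {t1..t1+\<delta>}" "v \<in> cball q (r/2)" "w \<in> cball q (r/2)" for s v w
        using rL(3) sI[OF that(1)] ball[OF that(2)] ball[OF that(3)] by auto
    qed
    then show "\<exists>w. w t1 = q \<and> sol F t1 (t1+\<delta>) w" unfolding sol_def by blast
  qed
  then show ?thesis using rL(1) \<delta>0 by blast
qed

lemma combine:
  assumes "t0 \<in> A" "\<And>t s. t \<in> A \<Longrightarrow> t0 \<le> s \<Longrightarrow> s \<le> t \<Longrightarrow> s \<in> A"
    "\<And>t. t \<in> A \<Longrightarrow> t0 \<le> t \<and> t \<le> m t \<and> (\<exists>v. v t0 = u0 \<and> sol F t0 (m t) v)"
  shows "\<exists>U. U t0 = u0 \<and> (\<forall>T\<in>A. sol F t0 T U)"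
proof -
  define V where "V t = (SOME v. v t0 = u0 \<and> sol F t0 (m t) v)" for t
  have V: "V t t0 = u0 \<and> sol F t0 (m t) (V t)" if "t \<in> A" for t
    unfolding V_def using someI_ex[OF conjunct2[OF conjunct2[OF assms(3)[OF that]]]] .
  define U where "U t = V t t" for t
  have "U t0 = u0" using V[OF assms(1)] by (simp add: U_def)
  moreover have "sol F t0 T U" if T: "T \<in> A" for T
  proof -
    have sT: "sol F t0 T (V T)" using V[OF T] assms(3)[OF T] by (auto intro: sol_restrict)
    have eq: "U t = V T t" if t: "t \<in> {t0..T}" for t
    proof -
      have tA: "t \<in> A" using assms(2)[OF T] t by auto
      show ?thesis unfolding U_def
        by (rule uniq2[of t0 "m t" "V t" "m T" "V T"]) (use V[OF tA] V[OF T] assms(3)[OF tA] assms(3)[OF T] t in auto)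
    qed
    show ?thesis unfolding sol_def
    proof
      fix t assume t: "t \<in> {t0..T}"
      have "(V T has_vector_derivative F t (V T t)) (at t within {t0..T})" using sT t by (auto simp: sol_def)
      then show "(U has_vector_derivative F t (U t)) (at t within {t0..T})"
        using eq[OF t] by (intro has_vector_derivative_transform[OF t eq]) auto
    qed
  qed
  ultimately show ?thesis by blast
qed

lemma global:
  assumes apriori: "\<And>T u. t0 < T \<Longrightarrow> u t0 = u0 \<Longrightarrow> (\<forall>T'\<in>{t0..<T}. sol F t0 T' u) \<Longrightarrow>
     \<exists>p. \<forall>\<epsilon>>0. \<forall>\<delta>>0. \<exists>t1. T - \<delta> < t1 \<and> t1 < T \<and> t0 \<le> t1 \<and> dist (u t1) p < \<epsilon>"
  shows "\<exists>U. U t0 = u0 \<and> (\<forall>T\<ge>t0. sol F t0 T U)"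
proof -
  define solv where "solv T \<longleftrightarrow> (\<exists>v. v t0 = u0 \<and> sol F t0 T v)" for T
  have down: "solv s" if sT: "solv T" and s12: "t0 \<le> s" "s \<le> T" for s T
  proof -
    obtain v where v: "v t0 = u0" "sol F t0 T v" using sT by (auto simp: solv_def)
    then show ?thesis unfolding solv_def using sol_restrict[of F t0 T v t0 s] s12 by auto
  qed
  have all: "solv T" if "T \<ge> t0" for T
  proof (rule ccontr)
    assume nT: "\<not> solv T"
    define N where "N = {T. t0 \<le> T \<and> \<not> solv T}"
    define Ts where "Ts = Inf N"
    have TN: "T \<in> N" using nT that by (auto simp: N_def)
    have bdd: "bdd_below N" by (auto simp: N_def bdd_below_def)
    have t0Ts: "t0 \<le> Ts" unfolding Ts_def using TN by (intro cInf_greatest) (auto simp: N_def)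
    have below: "solv T'" if "t0 \<le> T'" "T' < Ts" for T'
    proof (rule ccontr)
      assume "\<not> solv T'" then have "T' \<in> N" using that by (auto simp: N_def)
      then have "Ts \<le> T'" unfolding Ts_def using bdd by (rule cInf_lower)
      then show False using that by simp
    qed
    have ext: False if "b > Ts" "solv b" for b
    proof -
      obtain T' where "T' \<in> N" "T' < b" using cInf_less_iff[of N b] TN bdd \<open>b > Ts\<close> unfolding Ts_def by blast
      then show False using down[OF \<open>solv b\<close>] by (auto simp: N_def)
    qed
    obtain r \<delta> where r\<delta>: "r > 0" "\<delta> > 0" "\<forall>t1\<in>{t0..t0}. \<forall>q\<in>cball u0 (r/2). \<exists>w. w t1 = q \<and> sol F t1 (t1+\<delta>) w"
      using local_ext[of t0 u0] by blast
    have "solv (t0 + \<delta>)" using r\<delta> unfolding solv_def by force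
    then have Ts_gt: "t0 < Ts" using ext[of "t0+\<delta>"] r\<delta>(2) by force
    obtain U where U: "U t0 = u0" "\<forall>T'\<in>{t0..<Ts}. sol F t0 T' U"
    proof (atomize_elim, rule combine[where m="\<lambda>t. (t + Ts)/2"])
      fix t assume "t \<in> {t0..<Ts}"
      then show "t0 \<le> t \<and> t \<le> (t + Ts) / 2 \<and> (\<exists>v. v t0 = u0 \<and> sol F t0 ((t + Ts) / 2) v)"
        using below[of "(t + Ts)/2"] by (auto simp: solv_def)
    qed (use Ts_gt in auto)
    obtain p where p: "\<forall>\<epsilon>>0. \<forall>\<delta>>0. \<exists>t1. Ts - \<delta> < t1 \<and> t1 < Ts \<and> t0 \<le> t1 \<and> dist (U t1) p < \<epsilon>"
      using apriori[OF Ts_gt U(1) U(2)] by blast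
    obtain r \<delta> where r\<delta>: "r > 0" "\<delta> > 0" "\<forall>t1\<in>{t0..Ts}. \<forall>q\<in>cball p (r/2). \<exists>w. w t1 = q \<and> sol F t1 (t1+\<delta>) w"
      using local_ext[of Ts p] by blast
    obtain t1 where t1: "Ts - \<delta>/2 < t1" "t1 < Ts" "t0 \<le> t1" "dist (U t1) p < r/2"
      using p r\<delta> by (meson half_gt_zero)
    obtain w where w: "w t1 = U t1" "sol F t1 (t1+\<delta>) w"
    proof -
      have "t1 \<in> {t0..Ts}" "U t1 \<in> cball p (r/2)" using t1 by (auto simp: dist_commute)
      then show ?thesis using r\<delta>(3) that by blast
    qed
    have "sol F t0 (t1+\<delta>) (\<lambda>t. if t \<in> {t0..t1} then U t else w t)"
      by (rule sol_glue) (use U w t1 r\<delta> in auto)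
    then have "solv (t1 + \<delta>)" using U(1) t1 unfolding solv_def by (intro exI[of _ "\<lambda>t. if t \<in> {t0..t1} then U t else w t"]) auto
    then show False using ext[of "t1+\<delta>"] t1 by auto
  qed
  have "\<exists>U. U t0 = u0 \<and> (\<forall>T\<in>{t0..}. sol F t0 T U)"
    by (rule combine[where m="\<lambda>t. t+1"]) (use all in \<open>auto simp: solv_def\<close>)
  then show ?thesis by auto
qed

end



instance prod :: ("{real_normed_vector,complete_space}", "{real_normed_vector,complete_space}") banach ..

definition Fsys :: "real \<Rightarrow> real \<Rightarrow> ('a::real_normed_vector \<Rightarrow> 'a) \<Rightarrow> (real \<Rightarrow> 'a) \<Rightarrow> real \<Rightarrow> 'a \<times> 'a \<Rightarrow> 'a \<times> 'a" where
  "Fsys \<alpha> \<beta> g e t u = (snd u - \<beta> *\<^sub>R g (fst u) - \<beta> *\<^sub>R e t,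
      - (\<alpha>/t) *\<^sub>R (snd u - \<beta> *\<^sub>R g (fst u) - \<beta> *\<^sub>R e t) - g (fst u) - e t)"

lemma vd_fst: "(u has_vector_derivative d) F \<Longrightarrow> ((\<lambda>t. fst (u t)) has_vector_derivative fst d) F"
  unfolding has_vector_derivative_def by (drule has_derivative_fst) simp

lemma vd_snd: "(u has_vector_derivative d) F \<Longrightarrow> ((\<lambda>t. snd (u t)) has_vector_derivative snd d) F"
  unfolding has_vector_derivative_def by (drule has_derivative_snd) simp

lemma g_loclip:
  fixes f :: "'a::{real_inner,complete_space} \<Rightarrow> real"
  assumes "C2_with_gradient f g"
  shows "\<exists>r>0. \<exists>L\<ge>0. \<forall>x\<in>cball p r. \<forall>y\<in>cball p r. norm (g x - g y) \<le> L * norm (x - y)"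
proof -
  obtain D2 :: "'a \<Rightarrow> ('a \<Rightarrow>\<^sub>L 'a)" where D2: "\<And>x. (g has_derivative blinfun_apply (D2 x)) (at x)" "continuous_on UNIV D2"
    using assms unfolding C2_with_gradient_def by blast
  obtain r where r: "r > 0" "\<forall>y. dist y p < r \<longrightarrow> dist (D2 y) (D2 p) < 1"
    using D2(2) unfolding continuous_on_iff by (meson UNIV_I zero_less_one)
  have "\<forall>x\<in>cball p (r/2). \<forall>y\<in>cball p (r/2). norm (g x - g y) \<le> (norm (D2 p) + 1) * norm (x - y)"
  proof (intro ballI)
    fix x y assume xy: "x \<in> cball p (r/2)" "y \<in> cball p (r/2)"
    show "norm (g x - g y) \<le> (norm (D2 p) + 1) * norm (x - y)"
    proof (rule differentiable_bound[where f' = "\<lambda>x. blinfun_apply (D2 x)"])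
      show "(g has_derivative blinfun_apply (D2 z)) (at z within cball p (r/2))" for z
        using D2(1) by (rule has_derivative_at_withinI)
      show "onorm (blinfun_apply (D2 z)) \<le> norm (D2 p) + 1" if "z \<in> cball p (r/2)" for z
      proof -
        have "dist z p < r" using that r by (auto simp: dist_commute)
        then have "dist (D2 z) (D2 p) < 1" using r by blast
        then have "norm (D2 z) \<le> norm (D2 p) + 1" using norm_triangle_sub[of "D2 z" "D2 p"]
          by (simp add: dist_norm)
        then show ?thesis by (simp add: norm_blinfun.rep_eq)
      qed
    qed (use xy in auto)
  qed
  then show ?thesis using r by (intro exI[of _ "r/2"]) (auto intro!: exI[of _ "norm (D2 p) + 1"])
qed

lemma Fsys_lip:
  fixes g :: "'a::real_normed_vector \<Rightarrow> 'a"
  assumes gl: "\<And>p. \<exists>r>0. \<exists>L\<ge>0. \<forall>x\<in>cball p r. \<forall>y\<in>cball p r. norm (g x - g y) \<le> L * norm (x - y)"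
    and "t0 > 0" "\<alpha> \<ge> 0" "\<beta> \<ge> 0"
  shows "\<exists>r>0. \<exists>L\<ge>0. \<forall>t\<ge>t0. \<forall>v\<in>cball p r. \<forall>w\<in>cball p r.
     norm (Fsys \<alpha> \<beta> g e t v - Fsys \<alpha> \<beta> g e t w) \<le> L * norm (v - w)"
proof -
  obtain r Lg where rL: "r > 0" "Lg \<ge> 0" "\<forall>x\<in>cball (fst p) r. \<forall>y\<in>cball (fst p) r. norm (g x - g y) \<le> Lg * norm (x - y)"
    using gl[of "fst p"] by blast
  define L where "L = (1 + \<beta> * Lg) * (1 + \<alpha> / t0) + Lg"
  have L0: "L \<ge> 0" using rL assms by (simp add: L_def)
  have "norm (Fsys \<alpha> \<beta> g e t v - Fsys \<alpha> \<beta> g e t w) \<le> L * norm (v - w)"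
    if t: "t \<ge> t0" and v: "v \<in> cball p r" and w: "w \<in> cball p r" for t v w
  proof -
    have fv: "fst v \<in> cball (fst p) r" using v dist_fst_le[of p v] by auto
    have fw: "fst w \<in> cball (fst p) r" using w dist_fst_le[of p w] by auto
    define n where "n = norm (v - w)"
    have n1: "norm (fst v - fst w) \<le> n" unfolding n_def using norm_fst_le[of "fst v - fst w" "snd v - snd w"]
      by (metis fst_diff prod.collapse snd_diff)
    have n2: "norm (snd v - snd w) \<le> n" unfolding n_def using norm_snd_le[of "snd v - snd w" "fst v - fst w"]
      by (metis fst_diff prod.collapse snd_diff)
    have gg: "norm (g (fst v) - g (fst w)) \<le> Lg * n"
      using rL(3) fv fw n1 rL(2) by (meson mult_left_mono order_trans)
    define d1 where "d1 = (snd v - snd w) - \<beta> *\<^sub>R (g (fst v) - g (fst w))"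
    have d1: "norm d1 \<le> (1 + \<beta> * Lg) * n"
    proof -
      have "norm d1 \<le> norm (snd v - snd w) + \<beta> * norm (g (fst v) - g (fst w))"
        unfolding d1_def using norm_triangle_ineq4 assms(4) by (metis abs_of_nonneg norm_scaleR)
      also have "\<dots> \<le> n + \<beta> * (Lg * n)" using n2 gg assms(4) by (intro add_mono mult_left_mono) auto
      finally show ?thesis by (simp add: algebra_simps)
    qed
    have at: "\<alpha> / t \<le> \<alpha> / t0" "0 \<le> \<alpha> / t" using assms t by (auto intro: divide_left_mono)
    have eq: "Fsys \<alpha> \<beta> g e t v - Fsys \<alpha> \<beta> g e t w = (d1, - (\<alpha>/t) *\<^sub>R d1 - (g (fst v) - g (fst w)))"
      unfolding Fsys_def d1_def by (simp add: algebra_simps)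
    have "norm (Fsys \<alpha> \<beta> g e t v - Fsys \<alpha> \<beta> g e t w) \<le> norm d1 + norm (- (\<alpha>/t) *\<^sub>R d1 - (g (fst v) - g (fst w)))"
      unfolding eq by (rule norm_Pair_le)
    also have "\<dots> \<le> norm d1 + ((\<alpha>/t) * norm d1 + norm (g (fst v) - g (fst w)))"
      using norm_triangle_ineq4[of "- (\<alpha>/t) *\<^sub>R d1" "g (fst v) - g (fst w)"] at assms(2,3) t by simp
    also have "\<dots> \<le> (1 + \<beta> * Lg) * n + ((\<alpha>/t0) * ((1 + \<beta> * Lg) * n) + Lg * n)"
      using d1 gg at by (intro add_mono mult_mono) auto
    also have "\<dots> = L * n" by (simp add: L_def algebra_simps)
    finally show ?thesis by (simp add: n_def)
  qed
  then show ?thesis using rL(1) L0 by blast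
qed

lemma Fsys_cont:
  fixes g :: "'a::real_normed_vector \<Rightarrow> 'a"
  assumes "continuous_on UNIV g" "continuous_on {t0..} e" "t0 > 0" "t0 \<le> a" "continuous_on {a..b} u"
  shows "continuous_on {a..b} (\<lambda>s. Fsys \<alpha> \<beta> g e s (u s))"
proof -
  have e: "continuous_on {a..b} e" using assms(2) by (rule continuous_on_subset) (use assms in auto)
  have g: "continuous_on {a..b} (\<lambda>s. g (fst (u s)))"
    by (rule continuous_on_compose2[OF assms(1)]) (auto intro: continuous_intros assms(5))
  show ?thesis unfolding Fsys_def
    by (intro continuous_intros e g assms(5)) (use assms in auto)
qed



lemma lip_limit:
  fixes h :: "real \<Rightarrow> 'c::{real_normed_vector,complete_space}"
  assumes "a < T" "K \<ge> 0" "\<And>s t. s \<in> {a..<T} \<Longrightarrow> t \<in> {a..<T} \<Longrightarrow> norm (h t - h s) \<le> K * \<bar>t - s\<bar>"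
  shows "\<exists>l. \<forall>t\<in>{a..<T}. norm (h t - l) \<le> K * (T - t)"
proof -
  define s where "s n = T - (T - a) * inverse (real (Suc n))" for n
  have sI: "s n \<in> {a..<T}" for n
  proof -
    have "inverse (real (Suc n)) \<le> 1" "inverse (real (Suc n)) > 0" by (auto simp: field_simps)
    then have "(T - a) * inverse (real (Suc n)) \<le> (T - a)" "(T - a) * inverse (real (Suc n)) > 0"
      using assms(1) by (auto intro: mult_left_le)
    then show ?thesis by (auto simp: s_def)
  qed
  have slim: "s \<longlonglongrightarrow> T"
    unfolding s_def by (rule tendsto_eq_intros LIMSEQ_inverse_real_of_nat | simp)+
  have "Cauchy (\<lambda>n. h (s n))"
  proof (rule metric_CauchyI)
    fix e :: real assume "e > 0"
    then have "e / (K + 1) > 0" using assms by simp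
    then obtain N where N: "\<forall>m\<ge>N. \<forall>n\<ge>N. dist (s m) (s n) < e / (K + 1)"
      using metric_CauchyD[OF LIMSEQ_imp_Cauchy[OF slim]] by blast
    have "dist (h (s m)) (h (s n)) < e" if "m \<ge> N" "n \<ge> N" for m n
    proof -
      have "dist (h (s m)) (h (s n)) \<le> K * \<bar>s m - s n\<bar>" using assms(3)[OF sI sI] by (simp add: dist_norm)
      also have "\<dots> \<le> K * (e / (K + 1))" using N[rule_format, OF that] assms(2) by (intro mult_left_mono) (auto simp: dist_real_def)
      also have "\<dots> < e" using \<open>e > 0\<close> assms(2) by (simp add: field_simps)
      finally show ?thesis .
    qed
    then show "\<exists>N. \<forall>m\<ge>N. \<forall>n\<ge>N. dist (h (s m)) (h (s n)) < e" by blast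
  qed
  then obtain l where l: "(\<lambda>n. h (s n)) \<longlonglongrightarrow> l" by (auto simp: Cauchy_convergent_iff convergent_def)
  have "norm (h t - l) \<le> K * (T - t)" if t: "t \<in> {a..<T}" for t
  proof -
    have "K * \<bar>T - t\<bar> \<ge> norm (h t - l)"
    proof (rule tendsto_le[OF trivial_limit_sequentially])
      show "(\<lambda>n. K * \<bar>s n - t\<bar>) \<longlonglongrightarrow> K * \<bar>T - t\<bar>" by (intro tendsto_intros slim)
      show "(\<lambda>n. norm (h t - h (s n))) \<longlonglongrightarrow> norm (h t - l)" by (intro tendsto_intros l)
      show "\<forall>\<^sub>F n in sequentially. norm (h t - h (s n)) \<le> K * \<bar>s n - t\<bar>"
        using assms(3)[OF sI t] by (simp add: abs_minus_commute)
    qed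
    then show ?thesis using t by simp
  qed
  then show ?thesis by blast
qed

lemma bounded_cont:
  fixes h :: "real \<Rightarrow> 'c::real_normed_vector"
  assumes "continuous_on {a..b} h"
  shows "\<exists>C\<ge>0. \<forall>t\<in>{a..b}. norm (h t) \<le> C"
proof -
  have "bounded (h ` {a..b})" by (intro compact_imp_bounded compact_continuous_image assms) auto
  then obtain C where "\<forall>t\<in>{a..b}. norm (h t) \<le> C" unfolding bounded_iff by auto
  then show ?thesis by (intro exI[of _ "max C 0"]) force
qed



lemma lip_from_deriv:
  fixes h :: "real \<Rightarrow> 'c::real_normed_vector"
  assumes "\<And>\<tau> t. t \<in> {a..<T} \<Longrightarrow> \<tau> \<in> {a..t} \<Longrightarrow> (h has_vector_derivative h' \<tau>) (at \<tau> within {a..t})"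
    "\<And>\<tau>. \<tau> \<in> {a'..<T} \<Longrightarrow> norm (h' \<tau>) \<le> K" "a \<le> a'"
    "s \<in> {a'..<T}" "t \<in> {a'..<T}"
  shows "norm (h t - h s) \<le> K * \<bar>t - s\<bar>"
proof -
  have main: "norm (h t - h s) \<le> K * (t - s)" if "s \<le> t" "s \<in> {a'..<T}" "t \<in> {a'..<T}" for s t
  proof (rule vec_mvt_bound[OF \<open>s \<le> t\<close>])
    show "(h has_vector_derivative h' x) (at x within {s..t})" if "x \<in> {s..t}" for x
      by (rule has_vector_derivative_within_subset[OF assms(1)[of t x]])
         (use that \<open>s \<in> {a'..<T}\<close> \<open>t \<in> {a'..<T}\<close> assms(3) in auto)
    show "norm (h' x) \<le> K" if "x \<in> {s..t}" for x
      using assms(2) that \<open>s \<in> {a'..<T}\<close> \<open>t \<in> {a'..<T}\<close> by auto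
  qed
  show ?thesis
  proof (cases "s \<le> t")
    case True then show ?thesis using main[OF True assms(4,5)] by simp
  next
    case False then show ?thesis using main[of t s] assms(4,5) by (simp add: norm_minus_commute)
  qed
qed

context
  fixes f :: "'a::{real_inner,complete_space} \<Rightarrow> real" and g :: "'a \<Rightarrow> 'a"
    and D2 :: "'a \<Rightarrow> ('a \<Rightarrow>\<^sub>L 'a)" and e e' :: "real \<Rightarrow> 'a" and \<alpha> \<beta> t0 :: real and z :: 'a
  assumes cv: "convex_on UNIV f" and minz: "\<And>y. f z \<le> f y"
   and df: "\<And>x. (f has_derivative (\<lambda>h. inner (g x) h)) (at x)"
   and dg: "\<And>x. (g has_derivative blinfun_apply (D2 x)) (at x)"
   and D2c: "continuous_on UNIV D2"
   and de: "\<And>t. t \<in> {t0..} \<Longrightarrow> (e has_vector_derivative e' t) (at t within {t0..})"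
   and e'c: "continuous_on {t0..} e'"
   and pos: "t0 > 0" "\<alpha> \<ge> 0" "\<beta> \<ge> 0"
begin

lemma econt: "continuous_on {t0..} e"
  unfolding continuous_on_eq_continuous_within using de has_vector_derivative_continuous by blast

lemma gcont: "continuous_on UNIV g"
  by (rule continuous_at_imp_continuous_on) (use dg has_derivative_continuous in blast)

lemma apriori:
  assumes T: "t0 < T" and solu: "\<forall>T'\<in>{t0..<T}. sol (Fsys \<alpha> \<beta> g e) t0 T' u"
  shows "\<exists>p. \<forall>\<epsilon>>0. \<forall>\<delta>>0. \<exists>t1. T - \<delta> < t1 \<and> t1 < T \<and> t0 \<le> t1 \<and> dist (u t1) p < \<epsilon>"
proof -
  define X where "X = (\<lambda>\<tau>. fst (u \<tau>))"
  define Z where "Z = (\<lambda>\<tau>. snd (u \<tau>))"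
  define V where "V = (\<lambda>\<tau>. Z \<tau> - \<beta> *\<^sub>R g (X \<tau>) - \<beta> *\<^sub>R e \<tau>)"
  define Z' where "Z' = (\<lambda>\<tau>. - (\<alpha>/\<tau>) *\<^sub>R V \<tau> - g (X \<tau>) - e \<tau>)"
  define V' where "V' = (\<lambda>\<tau>. Z' \<tau> - \<beta> *\<^sub>R D2 (X \<tau>) (V \<tau>) - \<beta> *\<^sub>R e' \<tau>)"
  define E where "E = (\<lambda>\<tau>. (1/2) * inner (V \<tau>) (V \<tau>) + f (X \<tau>))"
  define E' where "E' = (\<lambda>\<tau>. inner (V \<tau>) (V' \<tau>) + inner (g (X \<tau>)) (V \<tau>))"
  have uder: "(u has_vector_derivative Fsys \<alpha> \<beta> g e \<tau> (u \<tau>)) (at \<tau> within {t0..t})"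
    if "t \<in> {t0..<T}" "\<tau> \<in> {t0..t}" for \<tau> t
    using solu that unfolding sol_def by blast
  have Xder: "(X has_vector_derivative V \<tau>) (at \<tau> within {t0..t})"
    if "t \<in> {t0..<T}" "\<tau> \<in> {t0..t}" for \<tau> t
    using vd_fst[OF uder[OF that]] unfolding X_def V_def Z_def Fsys_def by simp
  have Zder: "(Z has_vector_derivative Z' \<tau>) (at \<tau> within {t0..t})"
    if "t \<in> {t0..<T}" "\<tau> \<in> {t0..t}" for \<tau> t
    using vd_snd[OF uder[OF that]] unfolding X_def V_def Z_def Z'_def Fsys_def by simp
  have eder: "(e has_vector_derivative e' \<tau>) (at \<tau> within {t0..t})"
    if "t \<in> {t0..<T}" "\<tau> \<in> {t0..t}" for \<tau> t
    by (rule has_vector_derivative_within_subset[OF de]) (use that in auto)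
  have gXder: "((\<lambda>\<tau>. g (X \<tau>)) has_vector_derivative D2 (X \<tau>) (V \<tau>)) (at \<tau> within {t0..t})"
    if "t \<in> {t0..<T}" "\<tau> \<in> {t0..t}" for \<tau> t
  proof -
    have x: "(X has_derivative (\<lambda>h. h *\<^sub>R V \<tau>)) (at \<tau> within {t0..t})"
      using Xder[OF that] by (simp add: has_vector_derivative_def)
    from has_derivative_compose[OF x dg] show ?thesis
      unfolding has_vector_derivative_def by (simp only: blinfun.scaleR_right)
  qed
  have sc: "((\<lambda>\<tau>. c *\<^sub>R h \<tau>) has_vector_derivative c *\<^sub>R h') F" if "(h has_vector_derivative h') F"
    for c :: real and h :: "real \<Rightarrow> 'a" and h' F
    using bounded_linear.has_vector_derivative[OF bounded_linear_scaleR_right that] .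
  have Vder: "(V has_vector_derivative V' \<tau>) (at \<tau> within {t0..t})"
    if "t \<in> {t0..<T}" "\<tau> \<in> {t0..t}" for \<tau> t
  proof -
    have "((\<lambda>\<tau>. Z \<tau> - \<beta> *\<^sub>R g (X \<tau>) - \<beta> *\<^sub>R e \<tau>) has_vector_derivative V' \<tau>) (at \<tau> within {t0..t})"
      unfolding V'_def by (intro has_vector_derivative_diff sc Zder[OF that] gXder[OF that] eder[OF that])
    then show ?thesis unfolding V_def .
  qed
  have Eder: "(E has_derivative (\<lambda>h. h * E' \<tau>)) (at \<tau> within {t0..t})"
    if "t \<in> {t0..<T}" "\<tau> \<in> {t0..t}" for \<tau> t
  proof -
    have v: "(V has_derivative (\<lambda>h. h *\<^sub>R V' \<tau>)) (at \<tau> within {t0..t})"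
      using Vder[OF that] by (simp add: has_vector_derivative_def)
    have x: "(X has_derivative (\<lambda>h. h *\<^sub>R V \<tau>)) (at \<tau> within {t0..t})"
      using Xder[OF that] by (simp add: has_vector_derivative_def)
    have fx: "((\<lambda>\<tau>. f (X \<tau>)) has_derivative (\<lambda>h. inner (g (X \<tau>)) (h *\<^sub>R V \<tau>))) (at \<tau> within {t0..t})"
      using has_derivative_compose[OF x df] .
    have "(E has_derivative (\<lambda>h. (1/2) * (inner (V \<tau>) (h *\<^sub>R V' \<tau>) + inner (h *\<^sub>R V' \<tau>) (V \<tau>))
        + inner (g (X \<tau>)) (h *\<^sub>R V \<tau>))) (at \<tau> within {t0..t})"
      unfolding E_def by (intro has_derivative_add has_derivative_mult_right has_derivative_inner v fx)
    then show ?thesis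
      by (rule has_derivative_eq_rhs) (simp add: fun_eq_iff E'_def inner_commute algebra_simps)
  qed
  have E'eq: "E' \<tau> = - (\<alpha>/\<tau>) * inner (V \<tau>) (V \<tau>) - \<beta> * inner (V \<tau>) (D2 (X \<tau>) (V \<tau>))
      - inner (V \<tau>) (e \<tau> + \<beta> *\<^sub>R e' \<tau>)" for \<tau>
  proof -
    have 1: "inner (V \<tau>) (V' \<tau>) = inner (V \<tau>) (Z' \<tau>) - \<beta> * inner (V \<tau>) (D2 (X \<tau>) (V \<tau>)) - \<beta> * inner (V \<tau>) (e' \<tau>)"
      unfolding V'_def by (simp only: inner_diff_right inner_scaleR_right)
    have 2: "inner (V \<tau>) (Z' \<tau>) = - (\<alpha>/\<tau>) * inner (V \<tau>) (V \<tau>) - inner (V \<tau>) (g (X \<tau>)) - inner (V \<tau>) (e \<tau>)"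
      unfolding Z'_def by (simp only: inner_diff_right inner_scaleR_right inner_minus_right)
    have 3: "inner (V \<tau>) (e \<tau> + \<beta> *\<^sub>R e' \<tau>) = inner (V \<tau>) (e \<tau>) + \<beta> * inner (V \<tau>) (e' \<tau>)"
      by (simp only: inner_add_right inner_scaleR_right)
    have 4: "inner (g (X \<tau>)) (V \<tau>) = inner (V \<tau>) (g (X \<tau>))" by (rule inner_commute)
    show ?thesis unfolding E'_def using 1 2 3 4 by linarith
  qed
  have E'le: "E' \<tau> \<le> norm (V \<tau>) * norm (e \<tau> + \<beta> *\<^sub>R e' \<tau>)" if "\<tau> \<ge> t0" for \<tau>
  proof -
    have "inner (D2 (X \<tau>) (V \<tau>)) (V \<tau>) \<ge> 0"
      by (rule convex_hess_nonneg[OF cv df, of "\<lambda>x. blinfun_apply (D2 x)"]) (rule dg)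
    then have h: "\<beta> * inner (V \<tau>) (D2 (X \<tau>) (V \<tau>)) \<ge> 0" using pos by (simp add: inner_commute)
    have a: "(\<alpha>/\<tau>) * inner (V \<tau>) (V \<tau>) \<ge> 0" using pos that by simp
    have c: "- inner (V \<tau>) (e \<tau> + \<beta> *\<^sub>R e' \<tau>) \<le> norm (V \<tau>) * norm (e \<tau> + \<beta> *\<^sub>R e' \<tau>)"
      using norm_cauchy_schwarz[of "V \<tau>" "- (e \<tau> + \<beta> *\<^sub>R e' \<tau>)"] unfolding inner_minus_right norm_minus_cancel .
    show ?thesis unfolding E'eq using h a c by linarith
  qed
  have cu: "continuous_on {t0..t} u" if "t \<in> {t0..<T}" for t using solu that sol_cont by blast
  have Vc: "continuous_on {t0..t} V" if "t \<in> {t0..<T}" for t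
  proof -
    have ec: "continuous_on {t0..t} e" by (rule continuous_on_subset[OF econt]) auto
    have gc: "continuous_on {t0..t} (\<lambda>\<tau>. g (X \<tau>))" unfolding X_def
      by (rule continuous_on_compose2[OF gcont continuous_on_fst[OF cu[OF that]]]) auto
    show ?thesis unfolding V_def Z_def by (intro continuous_intros ec gc cu[OF that])
  qed
  obtain Ce where Ce: "Ce \<ge> 0" "\<forall>\<tau>\<in>{t0..T}. norm (e \<tau> + \<beta> *\<^sub>R e' \<tau>) \<le> Ce"
  proof -
    have "continuous_on {t0..T} (\<lambda>\<tau>. e \<tau> + \<beta> *\<^sub>R e' \<tau>)"
      by (intro continuous_intros continuous_on_subset[OF econt] continuous_on_subset[OF e'c]) auto
    from bounded_cont[OF this] show ?thesis using that by blast
  qed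
  define A where "A = E t0 - f z"
  define K where "K = (T - t0) * Ce"
  define B where "B = 1 + 2 * A + 2 * K"
  have A0: "A \<ge> 0" unfolding A_def E_def using minz[of "X t0"] inner_ge_zero[of "V t0"] by linarith
  have K0: "K \<ge> 0" using Ce T by (simp add: K_def)
  have Vb: "norm (V t) \<le> B" if t: "t \<in> {t0..<T}" for t
  proof -
    have "continuous_on {t0..t} (\<lambda>\<tau>. norm (V \<tau>))" by (intro continuous_intros Vc t)
    then obtain s where s: "s \<in> {t0..t}" "\<forall>\<tau>\<in>{t0..t}. norm (V \<tau>) \<le> norm (V s)"
      using continuous_attains_sup[of "{t0..t}" "\<lambda>\<tau>. norm (V \<tau>)"] t by fastforce
    define n where "n = norm (V s)"
    have Es: "E s - E t0 \<le> K * n"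
    proof (cases "s = t0")
      case True then show ?thesis using K0 by (simp add: n_def)
    next
      case False
      then have st: "t0 < s" using s by auto
      have "\<exists>\<xi>\<in>{t0<..<s}. E s - E t0 = (\<lambda>h. h * E' \<xi>) (s - t0)"
      proof (rule mvt_simple[OF st])
        fix x assume "t0 \<le> x" "x \<le> s"
        show "(E has_derivative (\<lambda>h. h * E' x)) (at x within {t0..s})"
          by (rule has_derivative_subset[OF Eder[OF t]]) (use \<open>t0 \<le> x\<close> \<open>x \<le> s\<close> s in auto)
      qed
      then obtain \<xi> where \<xi>: "\<xi> \<in> {t0<..<s}" "E s - E t0 = (s - t0) * E' \<xi>" by auto
      have "E' \<xi> \<le> norm (V \<xi>) * norm (e \<xi> + \<beta> *\<^sub>R e' \<xi>)" using E'le \<xi> by auto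
      also have "\<dots> \<le> n * Ce" unfolding n_def using s \<xi> Ce t by (intro mult_mono) auto
      finally have "(s - t0) * E' \<xi> \<le> (s - t0) * (n * Ce)"
        using \<xi> by (intro mult_left_mono) auto
      also have "\<dots> \<le> (T - t0) * (n * Ce)"
        using \<xi> s t Ce by (intro mult_right_mono) (auto simp: n_def)
      finally have "(s - t0) * E' \<xi> \<le> (T - t0) * (n * Ce)" .
      then show ?thesis using \<xi> by (simp add: K_def algebra_simps)
    qed
    have "(1/2) * n^2 + f z \<le> E s" using minz[of "X s"] by (simp add: E_def n_def power2_norm_eq_inner)
    then have n2: "n * n \<le> 2 * A + 2 * K * n" using Es by (simp add: A_def power2_eq_square algebra_simps)
    have "n \<le> B"
    proof (cases "n \<le> 1")
      case True then show ?thesis using A0 K0 by (simp add: B_def)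
    next
      case False
      have "2 * A \<le> 2 * A * n" using A0 False by (simp add: mult_le_cancel_left1)
      then have "n * n \<le> (2 * A + 2 * K) * n" using n2 by (simp add: distrib_right)
      then have "n \<le> 2 * A + 2 * K" using False by (simp add: mult_le_cancel_right_pos)
      then show ?thesis by (simp add: B_def)
    qed
    moreover have "t \<in> {t0..t}" using t by auto
    ultimately show ?thesis using s(2) unfolding n_def by fastforce
  qed
  have B0: "B \<ge> 0" using A0 K0 by (simp add: B_def)
  obtain xs where xs: "\<forall>t\<in>{t0..<T}. norm (X t - xs) \<le> B * (T - t)"
    using lip_limit[OF T B0, of X] lip_from_deriv[of t0 T X V t0 B] Xder Vb by blast
  obtain \<rho> where \<rho>: "\<rho> > 0" "\<forall>y. dist y xs < \<rho> \<longrightarrow> dist (g y) (g xs) < 1"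
    using gcont unfolding continuous_on_iff by (meson UNIV_I zero_less_one)
  define a1 where "a1 = max t0 (T - \<rho> / (2 * (B + 1)))"
  have a1: "t0 \<le> a1" "a1 < T" using T \<rho> B0 by (auto simp: a1_def)
  have gb: "norm (g (X \<tau>)) \<le> norm (g xs) + 1" if "\<tau> \<in> {a1..<T}" for \<tau>
  proof -
    have "norm (X \<tau> - xs) \<le> B * (T - \<tau>)" using xs that a1 by auto
    also have "\<dots> \<le> B * (\<rho> / (2 * (B + 1)))" using that B0 by (intro mult_left_mono) (auto simp: a1_def)
    also have "\<dots> < \<rho>"
    proof -
      have q: "B / (2 * (B + 1)) < 1" using B0 by (simp add: field_simps)
      have "B * (\<rho> / (2 * (B + 1))) = \<rho> * (B / (2 * (B + 1)))" by simp
      also have "\<dots> < \<rho> * 1" by (rule mult_strict_left_mono[OF q \<rho>(1)])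
      finally show ?thesis by simp
    qed
    finally have "dist (g (X \<tau>)) (g xs) < 1" using \<rho> by (simp add: dist_norm)
    then show ?thesis using norm_triangle_sub[of "g (X \<tau>)" "g xs"] by (simp add: dist_norm)
  qed
  obtain Cee where Cee: "Cee \<ge> 0" "\<forall>\<tau>\<in>{t0..T}. norm (e \<tau>) \<le> Cee"
  proof -
    have "continuous_on {t0..T} e" by (rule continuous_on_subset[OF econt]) auto
    from bounded_cont[OF this] show ?thesis using that by blast
  qed
  define K2 where "K2 = (\<alpha>/t0) * B + (norm (g xs) + 1) + Cee"
  have K20: "K2 \<ge> 0" using pos B0 Cee by (simp add: K2_def)
  have Z'b: "norm (Z' \<tau>) \<le> K2" if "\<tau> \<in> {a1..<T}" for \<tau>
  proof -
    have \<tau>: "\<tau> \<ge> t0" "\<tau> > 0" using that a1 pos by auto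
    have "norm (Z' \<tau>) \<le> norm (- (\<alpha>/\<tau>) *\<^sub>R V \<tau> - g (X \<tau>)) + norm (e \<tau>)"
      unfolding Z'_def by (rule norm_triangle_ineq4)
    also have "\<dots> \<le> (norm (- (\<alpha>/\<tau>) *\<^sub>R V \<tau>) + norm (g (X \<tau>))) + norm (e \<tau>)"
      by (intro add_mono norm_triangle_ineq4 order_refl)
    also have "norm (- (\<alpha>/\<tau>) *\<^sub>R V \<tau>) = (\<alpha>/\<tau>) * norm (V \<tau>)" using \<tau> pos by simp
    finally have "norm (Z' \<tau>) \<le> (\<alpha>/\<tau>) * norm (V \<tau>) + norm (g (X \<tau>)) + norm (e \<tau>)" .
    also have "\<dots> \<le> (\<alpha>/t0) * B + (norm (g xs) + 1) + Cee"
    proof (intro add_mono mult_mono)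
      show "\<alpha> / \<tau> \<le> \<alpha> / t0" using \<tau> pos by (intro divide_left_mono) auto
      show "norm (V \<tau>) \<le> B" using Vb that a1 by auto
      show "norm (g (X \<tau>)) \<le> norm (g xs) + 1" using gb that .
      show "norm (e \<tau>) \<le> Cee" using Cee that a1 by auto
    qed (use pos B0 in auto)
    finally show ?thesis by (simp add: K2_def)
  qed
  obtain zs where zs: "\<forall>t\<in>{a1..<T}. norm (Z t - zs) \<le> K2 * (T - t)"
    using lip_limit[OF a1(2) K20, of Z] lip_from_deriv[of t0 T Z Z' a1 K2] Zder Z'b a1(1) by blast
  show ?thesis
  proof (intro exI[of _ "(xs, zs)"] allI impI)
    fix \<epsilon> \<delta> :: real assume "\<epsilon> > 0" "\<delta> > 0"
    define m where "m = min (min \<delta> (T - a1)) (\<epsilon> / (B + K2 + 1))"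
    have m0: "m > 0" using \<open>\<epsilon> > 0\<close> \<open>\<delta> > 0\<close> a1 B0 K20 by (simp add: m_def)
    define t1 where "t1 = T - m/2"
    have "m \<le> T - a1" "m \<le> \<delta>" by (auto simp: m_def)
    then have t1: "t1 \<in> {a1..<T}" using m0 by (auto simp: t1_def)
    have "dist (u t1) (xs, zs) = norm ((X t1 - xs, Z t1 - zs))"
    proof -
      have "u t1 - (xs, zs) = (X t1 - xs, Z t1 - zs)" unfolding X_def Z_def by (simp add: prod_eq_iff)
      then show ?thesis by (simp add: dist_norm)
    qed
    also have "\<dots> \<le> norm (X t1 - xs) + norm (Z t1 - zs)" by (rule norm_Pair_le)
    also have "\<dots> \<le> B * (T - t1) + K2 * (T - t1)" using xs zs t1 a1 by (intro add_mono) auto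
    also have "\<dots> = (B + K2) * (m/2)" by (simp add: t1_def algebra_simps)
    also have "\<dots> \<le> (B + K2) * (\<epsilon> / (B + K2 + 1) / 2)"
    proof (rule mult_left_mono)
      have "m \<le> \<epsilon> / (B + K2 + 1)" by (simp add: m_def)
      then show "m / 2 \<le> \<epsilon> / (B + K2 + 1) / 2" by (rule divide_right_mono) simp
    qed (use B0 K20 in auto)
    also have "\<dots> < \<epsilon>"
    proof -
      define c where "c = B + K2"
      have c0: "c \<ge> 0" using B0 K20 by (simp add: c_def)
      have "c * (\<epsilon> / (c + 1) / 2) = \<epsilon> * (c / (c + 1)) / 2" by simp
      also have "\<dots> \<le> \<epsilon> * 1 / 2"
      proof (intro divide_right_mono mult_left_mono)
        show "c / (c + 1) \<le> 1" using c0 by (simp add: field_simps)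
      qed (use \<open>\<epsilon> > 0\<close> in auto)
      also have "\<dots> < \<epsilon>" using \<open>\<epsilon> > 0\<close> by simp
      finally show ?thesis by (simp add: c_def)
    qed
    finally have "dist (u t1) (xs, zs) < \<epsilon>" .
    moreover have "T - \<delta> < t1" "t1 < T" "t0 \<le> t1" using t1 m0 a1 \<open>m \<le> \<delta>\<close> by (auto simp: t1_def)
    ultimately show "\<exists>t1. T - \<delta> < t1 \<and> t1 < T \<and> t0 \<le> t1 \<and> dist (u t1) (xs, zs) < \<epsilon>" by blast
  qed
qed

end



lemma within_ext: "(t0::real) \<le> t \<Longrightarrow> at t within {t0..t+1} = at t within {t0..}"
  by (rule at_within_nhd[where S="{..<t+1}"]) auto

theorem corollary1:
  fixes f :: "'a::{real_inner,complete_space} \<Rightarrow> real"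
    and gradf :: "'a \<Rightarrow> 'a"
    and e :: "real \<Rightarrow> 'a"
    and \<alpha> \<beta> t0 :: real and x0 v0 :: 'a
  assumes "convex_on UNIV f"
    and "\<exists>z. \<forall>y. f z \<le> f y"
    and "C2_with_gradient f gradf"
    and "C1_on_halfline t0 e"
    and "t0 > 0" and "\<alpha> \<ge> 0" and "\<beta> \<ge> 0"
  shows "\<exists>x. classical_solution \<alpha> \<beta> t0 gradf e x0 v0 x \<and>
           (\<forall>y. classical_solution \<alpha> \<beta> t0 gradf e x0 v0 y \<longrightarrow> (\<forall>t\<ge>t0. y t = x t))"
proof -
  obtain z where minz: "\<And>y. f z \<le> f y" using assms(2) by blast
  obtain D2 :: "'a \<Rightarrow> ('a \<Rightarrow>\<^sub>L 'a)" where dg: "\<And>x. (gradf has_derivative blinfun_apply (D2 x)) (at x)"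
    and D2c: "continuous_on UNIV D2"
    using assms(3) unfolding C2_with_gradient_def by blast
  have df: "\<And>x. (f has_derivative (\<lambda>h. inner (gradf x) h)) (at x)"
    using assms(3) unfolding C2_with_gradient_def by blast
  obtain e' where de: "\<And>t. t \<in> {t0..} \<Longrightarrow> (e has_vector_derivative e' t) (at t within {t0..})"
    and e'c: "continuous_on {t0..} e'"
    using assms(4) unfolding C1_on_halfline_def by blast
  note ctx = assms(1) minz df dg D2c de e'c assms(5,6,7)
  have ec: "continuous_on {t0..} e" by (rule econt[OF ctx])
  have gc: "continuous_on UNIV gradf" by (rule gcont[OF ctx])
  define F where "F = Fsys \<alpha> \<beta> gradf e"
  have Fc: "\<And>a b u. t0 \<le> a \<Longrightarrow> continuous_on {a..b} u \<Longrightarrow> continuous_on {a..b} (\<lambda>s. F s (u s))"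
    unfolding F_def by (rule Fsys_cont[OF gc ec assms(5)])
  have Fl: "\<And>p. \<exists>r>0. \<exists>L\<ge>0. \<forall>t\<ge>t0. \<forall>v\<in>cball p r. \<forall>w\<in>cball p r. norm (F t v - F t w) \<le> L * norm (v - w)"
    unfolding F_def by (rule Fsys_lip[OF g_loclip[OF assms(3)] assms(5,6,7)])
  define u0 where "u0 = (x0, v0 + \<beta> *\<^sub>R (gradf x0 + e t0))"
  have ap: "\<exists>p. \<forall>\<epsilon>>0. \<forall>\<delta>>0. \<exists>t1. T - \<delta> < t1 \<and> t1 < T \<and> t0 \<le> t1 \<and> dist (u t1) p < \<epsilon>"
    if "t0 < T" "u t0 = u0" "\<forall>T'\<in>{t0..<T}. sol F t0 T' u" for T u
    using apriori[OF ctx that(1)] that(3) unfolding F_def by blast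
  obtain U where U0: "U t0 = u0" and Usol: "\<forall>T\<ge>t0. sol F t0 T U"
    using global[OF Fc Fl ap] by blast
  have Uder: "(U has_vector_derivative F t (U t)) (at t within {t0..})" if t: "t \<ge> t0" for t
  proof -
    have "sol F t0 (t+1) U" using Usol t by simp
    then have "(U has_vector_derivative F t (U t)) (at t within {t0..t+1})" using t by (simp add: sol_def)
    then show ?thesis using within_ext[OF t] by simp
  qed
  have Uc: "continuous_on {t0..} U"
    unfolding continuous_on_eq_continuous_within using Uder has_vector_derivative_continuous by blast
  define X where "X = (\<lambda>t. fst (U t))"
  define Z where "Z = (\<lambda>t. snd (U t))"
  define V where "V = (\<lambda>\<tau>. Z \<tau> - \<beta> *\<^sub>R gradf (X \<tau>) - \<beta> *\<^sub>R e \<tau>)"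
  define Z' where "Z' = (\<lambda>\<tau>. - (\<alpha>/\<tau>) *\<^sub>R V \<tau> - gradf (X \<tau>) - e \<tau>)"
  define V' where "V' = (\<lambda>\<tau>. Z' \<tau> - \<beta> *\<^sub>R D2 (X \<tau>) (V \<tau>) - \<beta> *\<^sub>R e' \<tau>)"
  have Xder: "(X has_vector_derivative V t) (at t within {t0..})" if "t \<ge> t0" for t
    using vd_fst[OF Uder[OF that]] unfolding X_def V_def Z_def F_def Fsys_def by simp
  have Zder: "(Z has_vector_derivative Z' t) (at t within {t0..})" if "t \<ge> t0" for t
    using vd_snd[OF Uder[OF that]] unfolding X_def V_def Z_def Z'_def F_def Fsys_def by simp
  have gXder: "((\<lambda>\<tau>. gradf (X \<tau>)) has_vector_derivative D2 (X t) (V t)) (at t within {t0..})"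
    if "t \<ge> t0" for t
  proof -
    have x: "(X has_derivative (\<lambda>h. h *\<^sub>R V t)) (at t within {t0..})"
      using Xder[OF that] by (simp add: has_vector_derivative_def)
    from has_derivative_compose[OF x dg] show ?thesis
      unfolding has_vector_derivative_def by (simp only: blinfun.scaleR_right)
  qed
  have sc: "((\<lambda>\<tau>. c *\<^sub>R h \<tau>) has_vector_derivative c *\<^sub>R h') F'" if "(h has_vector_derivative h') F'"
    for c :: real and h :: "real \<Rightarrow> 'a" and h' F'
    using bounded_linear.has_vector_derivative[OF bounded_linear_scaleR_right that] .
  have Vder: "(V has_vector_derivative V' t) (at t within {t0..})" if "t \<ge> t0" for t
  proof -
    have "((\<lambda>\<tau>. Z \<tau> - \<beta> *\<^sub>R gradf (X \<tau>) - \<beta> *\<^sub>R e \<tau>) has_vector_derivative V' t) (at t within {t0..})"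
      unfolding V'_def using that by (intro has_vector_derivative_diff sc Zder gXder de) auto
    then show ?thesis unfolding V_def .
  qed
  have Xc: "continuous_on {t0..} X" unfolding X_def by (intro continuous_intros Uc)
  have gXc: "continuous_on {t0..} (\<lambda>\<tau>. gradf (X \<tau>))"
    by (rule continuous_on_compose2[OF gc Xc]) auto
  have Vc: "continuous_on {t0..} V" unfolding V_def Z_def
    by (intro continuous_intros Uc gXc ec)
  have D2Xc: "continuous_on {t0..} (\<lambda>\<tau>. D2 (X \<tau>))"
    by (rule continuous_on_compose2[OF D2c Xc]) auto
  have DVc: "continuous_on {t0..} (\<lambda>\<tau>. D2 (X \<tau>) (V \<tau>))"
    by (rule bounded_bilinear.continuous_on[OF bounded_bilinear_blinfun_apply D2Xc Vc])
  have invc: "continuous_on {t0..} (\<lambda>\<tau>. \<alpha> / \<tau>)"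
    by (intro continuous_intros) (use assms(5) in auto)
  have V'c: "continuous_on {t0..} V'" unfolding V'_def Z'_def
    by (intro continuous_intros invc Vc gXc ec DVc e'c)
  have eqn: "V' t + (\<alpha> / t) *\<^sub>R V t + \<beta> *\<^sub>R (D2 (X t) (V t) + e' t) + gradf (X t) + e t = 0" for t
    unfolding V'_def Z'_def by (simp add: algebra_simps)
  have c1: "\<forall>t\<in>{t0..}. (X has_vector_derivative V t) (at t within {t0..})" using Xder by auto
  have c2: "\<forall>t\<in>{t0..}. (V has_vector_derivative V' t) (at t within {t0..})" using Vder by auto
  have c4: "\<forall>t\<in>{t0..}. \<exists>w. ((\<lambda>s. gradf (X s) + e s) has_vector_derivative w) (at t within {t0..}) \<and>
             V' t + (\<alpha> / t) *\<^sub>R V t + \<beta> *\<^sub>R w + gradf (X t) + e t = 0"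
  proof
    fix t :: real assume t: "t \<in> {t0..}"
    have "((\<lambda>s. gradf (X s) + e s) has_vector_derivative D2 (X t) (V t) + e' t) (at t within {t0..})"
      using t by (intro has_vector_derivative_add gXder de) auto
    then show "\<exists>w. ((\<lambda>s. gradf (X s) + e s) has_vector_derivative w) (at t within {t0..}) \<and>
             V' t + (\<alpha> / t) *\<^sub>R V t + \<beta> *\<^sub>R w + gradf (X t) + e t = 0"
      using eqn[of t] by blast
  qed
  have c5: "X t0 = x0" using U0 by (simp add: X_def u0_def)
  have c6: "V t0 = v0" using U0 by (simp add: V_def X_def Z_def u0_def algebra_simps)
  have sol_x: "classical_solution \<alpha> \<beta> t0 gradf e x0 v0 X"
    unfolding classical_solution_def
    by (rule exI[of _ V], rule exI[of _ V'], intro conjI c1 c2 V'c c4 c5 c6)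
  have uniq_y: "y t = X t" if y: "classical_solution \<alpha> \<beta> t0 gradf e x0 v0 y" and t: "t \<ge> t0" for y t
  proof -
    obtain y' y'' where y1: "\<forall>t\<in>{t0..}. (y has_vector_derivative y' t) (at t within {t0..})"
      and y2: "\<forall>t\<in>{t0..}. (y' has_vector_derivative y'' t) (at t within {t0..})"
      and y3: "\<forall>t\<in>{t0..}. \<exists>w. ((\<lambda>s. gradf (y s) + e s) has_vector_derivative w) (at t within {t0..}) \<and>
             y'' t + (\<alpha> / t) *\<^sub>R y' t + \<beta> *\<^sub>R w + gradf (y t) + e t = 0"
      and y4: "y t0 = x0" "y' t0 = v0"
      using y unfolding classical_solution_def by blast
    define Y where "Y = (\<lambda>s. (y s, y' s + \<beta> *\<^sub>R (gradf (y s) + e s)))"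
    have Yder: "(Y has_vector_derivative F s (Y s)) (at s within {t0..})" if s: "s \<in> {t0..}" for s
    proof -
      obtain w where w: "((\<lambda>s. gradf (y s) + e s) has_vector_derivative w) (at s within {t0..})"
        "y'' s + (\<alpha> / s) *\<^sub>R y' s + \<beta> *\<^sub>R w + gradf (y s) + e s = 0"
        using y3 s by blast
      have "(Y has_vector_derivative (y' s, y'' s + \<beta> *\<^sub>R w)) (at s within {t0..})"
        unfolding Y_def using y1 y2 s by (intro has_vector_derivative_Pair has_vector_derivative_add sc w(1)) auto
      moreover have "F s (Y s) = (y' s, y'' s + \<beta> *\<^sub>R w)"
      proof -
        have "y'' s + \<beta> *\<^sub>R w = - (\<alpha> / s) *\<^sub>R y' s - gradf (y s) - e s"
          using w(2) by (simp add: algebra_simps eq_neg_iff_add_eq_0)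
        then show ?thesis unfolding F_def Fsys_def Y_def by (simp add: algebra_simps)
      qed
      ultimately show ?thesis by simp
    qed
    have Ysol: "sol F t0 t Y" unfolding sol_def
    proof
      fix s assume "s \<in> {t0..t}"
      then show "(Y has_vector_derivative F s (Y s)) (at s within {t0..t})"
        by (intro has_vector_derivative_within_subset[OF Yder]) auto
    qed
    have "Y t0 = U t0" using U0 y4 by (simp add: Y_def u0_def)
    then have "\<forall>s\<in>{t0..t}. Y s = U s"
      using uniq[OF Fc Fl order_refl Ysol] Usol t by auto
    then have "Y t = U t" using t by auto
    then have "fst (Y t) = fst (U t)" by simp
    then show ?thesis by (simp add: Y_def X_def)
  qed
  show ?thesis using sol_x uniq_y by blast
qed


end
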